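(* Let $K$ be an open Legendrian knot for which \begin{equation} d_{\mathcal{H}}(p,q)=d_K(p,q)\qquad\text{for any $p$, $q\in K\setminus\{\infty\}$}. \end{equation} Then, $K$ is an infinite $\mathbb{R}$-circle.
   Context: $\mathcal{H}=\mathbb{C}\times\mathbb{R}$ is the 3-dimensional Heisenberg group with coordinates $(x,y,u)$, group law $(x,y,u)\cdot(x',y',u')=(x+x',y+y',u+u'+\tfrac12(xy'-x'y))$, horizontal distribution spanned by $X=\partial_x-\tfrac12 y\,\partial_u$, $Y=\partial_y+\tfrac12 x\,\partial_u$ (orthonormal, norm $|\cdot|$). The Korányi distance is $d_{\mathcal{H}}(p,q)=\|p^{-1}q\|_{\mathcal{H}}$, $\|(x,y,u)\|_{\mathcal{H}}=\sqrt[4]{(x^2+y^2)^2+16u^2}$. An open Legendrian knot is a smooth embedded closed Legendrian curve in $\mathcal{H}\cup\{\infty\}\cong S^3$ passing through $\infty$; $d_K$ denotes arc-length distance along $K$. An $\mathbb{R}$-circle is the intersection of $\partial B^2_{\mathbb{C}}\cong\mathcal{H}\cup\{\infty\}$ with the closure of a complete totally geodesic totally real surface in the complex hyperbolic unit ball $B^2_{\mathbb{C}}$; it is infinite if it passes through $\infty$. Equivalently, infinite $\mathbb{R}$-circles are exactly the open Legendrian knots whose vertical projection $(x,y,u)\mapsto(x,y)$ is an affine line in $\mathbb{C}$, i.e., the lines $\{(x_0,y_0,u_0)+t(a,b,-\tfrac12(y_0a-x_0b)):t\in\mathbb{R}\}$ with $(a,b)\neq(0,0)$. *)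

theory Defs
  imports "HOL-Analysis.Analysis"
begin

text \<open>Points of the Heisenberg group H = C x R are triples (x, y, u).\<close>
type_synonym heis = "real \<times> real \<times> real"

definition heis_mult :: "heis \<Rightarrow> heis \<Rightarrow> heis" where
  "heis_mult p q = (case p of (x, y, u) \<Rightarrow> case q of (x', y', u') \<Rightarrow>
      (x + x', y + y', u + u' + (1/2) * (x * y' - x' * y)))"

definition heis_inv :: "heis \<Rightarrow> heis" where
  "heis_inv p = (case p of (x, y, u) \<Rightarrow> (-x, -y, -u))"

definition koranyi_norm :: "heis \<Rightarrow> real" where
  "koranyi_norm p = (case p of (x, y, u) \<Rightarrow> root 4 ((x^2 + y^2)^2 + 16 * u^2))"

definition d_H :: "heis \<Rightarrow> heis \<Rightarrow> real" where
  "d_H p q = koranyi_norm (heis_mult (heis_inv p) q)"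

text \<open>A tangent vector v = (x', y', u') at p = (x, y, u) is horizontal iff it lies in
  span{X, Y}, i.e. v = x' X + y' Y; its sub-Riemannian norm is then sqrt(x'^2 + y'^2).\<close>
definition horizontal :: "heis \<Rightarrow> heis \<Rightarrow> bool" where
  "horizontal p v = (case p of (x, y, u) \<Rightarrow> case v of (x', y', u') \<Rightarrow>
      u' = (1/2) * (x * y' - y * x'))"

definition hnorm :: "heis \<Rightarrow> real" where
  "hnorm v = (case v of (x', y', u') \<Rightarrow> sqrt (x'^2 + y'^2))"

definition smooth_curve_with_derivs :: "(real \<Rightarrow> heis) \<Rightarrow> (nat \<Rightarrow> real \<Rightarrow> heis) \<Rightarrow> bool" where
  "smooth_curve_with_derivs \<gamma> D \<longleftrightarrow>
     D 0 = \<gamma> \<and> (\<forall>n t. (D n has_vector_derivative D (Suc n) t) (at t))"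

text \<open>A parametrisation gamma : R -> H of the finite part K - {infinity} of an open
  Legendrian knot K: smooth, regular, Legendrian, injective and proper (so that its
  closure in H \<union> {infinity} = S^3 is the embedded closed curve K through infinity).\<close>
definition open_legendrian_param :: "(real \<Rightarrow> heis) \<Rightarrow> (nat \<Rightarrow> real \<Rightarrow> heis) \<Rightarrow> bool" where
  "open_legendrian_param \<gamma> D \<longleftrightarrow>
     smooth_curve_with_derivs \<gamma> D \<and>
     (\<forall>t. D 1 t \<noteq> 0) \<and>
     (\<forall>t. horizontal (\<gamma> t) (D 1 t)) \<and>
     inj \<gamma> \<and>
     filterlim (\<lambda>t. norm (\<gamma> t)) at_top at_infinity"

definition arc_length :: "(nat \<Rightarrow> real \<Rightarrow> heis) \<Rightarrow> real \<Rightarrow> real \<Rightarrow> real" where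
  "arc_length D s t = integral {s..t} (\<lambda>r. hnorm (D 1 r))"

definition infinite_R_circle :: "heis set \<Rightarrow> bool" where
  "infinite_R_circle K \<longleftrightarrow>
     (\<exists>x0 y0 u0 a b. (a, b) \<noteq> (0, 0) \<and>
        K = {(x0 + t * a, y0 + t * b, u0 + t * (-(1/2) * (y0 * a - x0 * b))) | t. True})"

end

theory Submission
  imports Defs
begin

lemma alg:
  fixes L a b p q w :: real
  assumes L0: "L \<ge> 0" and E: "L^4 = (a^2+b^2)^2 + 16*w^2"
    and D: "4*L^3* sqrt(p^2+q^2) = 2*(a^2+b^2)*(2*a*p+2*b*q) + 32*w*(1/2*(a*q - b*p))"
    and pq: "p^2+q^2>0"
  shows "w = 0"
proof -
  define m where "m = sqrt(p^2+q^2)"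
  define S where "S = a^2+b^2"
  define A where "A = a*p+b*q"
  define B where "B = a*q-b*p"
  have m0: "m > 0" using pq m_def by simp
  have mm: "m^2 = p^2+q^2" using pq m_def by simp
  have S0: "S \<ge> 0" using S_def by simp
  have D': "L^3*m = S*A + 4*w*B" using D unfolding m_def S_def A_def B_def by (simp add: algebra_simps)
  have AB: "A^2+B^2 = S*m^2" unfolding mm A_def B_def S_def by (simp add: power2_eq_square algebra_simps)
  have CS: "(S*A+4*w*B)^2 \<le> (S^2+16*w^2)*(A^2+B^2)"
  proof -
    have "(S^2+16*w^2)*(A^2+B^2) - (S*A+4*w*B)^2 = (S*B - 4*w*A)^2" by (simp add: power2_eq_square algebra_simps)
    thus ?thesis by (smt (verit) zero_le_power2)
  qed
  have "(L^3*m)^2 \<le> L^4 * (S*m^2)" using CS D' AB E S_def by simp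
  moreover have "(L^3*m)^2 = (L^4*m^2)*L^2" by (simp add: eval_nat_numeral algebra_simps)
  moreover have "L^4 * (S*m^2) = (L^4*m^2)*S" by simp
  ultimately have ineq: "(L^4*m^2) * L^2 \<le> (L^4*m^2) * S" by simp
  show ?thesis
  proof (cases "L = 0")
    case True
    then have "S^2 + 16*w^2 = 0" using E S_def by simp
    then show ?thesis by (smt (verit) zero_le_power2 power_eq_0_iff)
  next
    case False
    hence "L^4*m^2 > 0" using L0 m0 by simp
    hence "L^2 \<le> S" using ineq by (metis mult_le_cancel_left_pos)
    hence "(L^2)^2 \<le> S^2" by (metis power_mono zero_le_power2)
    hence "L^4 \<le> S^2" by (simp add: power_mult[symmetric])
    hence "16*w^2 \<le> 0" using E S_def by simp
    thus ?thesis by (smt (verit) zero_le_power2 power_eq_0_iff)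
  qed
qed

lemma vd_comp:
  assumes "(g has_vector_derivative v) (at t)"
  shows "((\<lambda>t. fst (g t)) has_real_derivative fst v) (at t)"
    "((\<lambda>t. fst (snd (g t))) has_real_derivative fst (snd v)) (at t)"
    "((\<lambda>t. snd (snd (g t))) has_real_derivative snd (snd v)) (at t)"
proof -
  have g: "(g has_derivative (\<lambda>h. h *\<^sub>R v)) (at t)" using assms by (simp add: has_vector_derivative_def)
  show "((\<lambda>t. fst (g t)) has_real_derivative fst v) (at t)"
    using has_derivative_fst[OF g] unfolding has_field_derivative_def by (rule has_derivative_eq_rhs) (auto simp: fun_eq_iff mult.commute)
  show "((\<lambda>t. fst (snd (g t))) has_real_derivative fst (snd v)) (at t)"
    using has_derivative_fst[OF has_derivative_snd[OF g]] unfolding has_field_derivative_def by (rule has_derivative_eq_rhs) (auto simp: fun_eq_iff mult.commute)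
  show "((\<lambda>t. snd (snd (g t))) has_real_derivative snd (snd v)) (at t)"
    using has_derivative_snd[OF has_derivative_snd[OF g]] unfolding has_field_derivative_def by (rule has_derivative_eq_rhs) (auto simp: fun_eq_iff mult.commute)
qed

lemma dE_lemma:
  fixes x y u p q r :: "real \<Rightarrow> real"
  assumes dx: "\<And>t. (x has_real_derivative p t) (at t)"
   and dy: "\<And>t. (y has_real_derivative q t) (at t)"
   and du: "\<And>t. (u has_real_derivative r t) (at t)"
  shows "((\<lambda>\<tau>. ((x \<tau> - x s)^2 + (y \<tau> - y s)^2)^2 + 16 * (u \<tau> - u s - 1/2*(x s * y \<tau> - x \<tau> * y s))^2) has_real_derivative 2*((x t - x s)^2 + (y t - y s)^2)*(2*(x t - x s)*p t+2*(y t - y s)*q t) + 32*(u t - u s - 1/2*(x s * y t - x t * y s))*(r t - 1/2*(x s * q t - p t * y s))) (at t)"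
  apply (rule derivative_eq_intros dx dy du refl)+
  apply (simp add: algebra_simps)
  done

lemma main_w0:
  fixes \<gamma> :: "real \<Rightarrow> heis" and D :: "nat \<Rightarrow> real \<Rightarrow> heis"
  assumes A1: "open_legendrian_param \<gamma> D"
    and A3: "\<forall>s t. s \<le> t \<longrightarrow> d_H (\<gamma> s) (\<gamma> t) = arc_length D s t"
  defines "x \<equiv> \<lambda>t. fst (\<gamma> t)" and "y \<equiv> \<lambda>t. fst (snd (\<gamma> t))" and "u \<equiv> \<lambda>t. snd (snd (\<gamma> t))"
  shows "u t - u s = 1/2 * (x s * y t - x t * y s)"
proof -
  from A1 have sm: "\<forall>n t. (D n has_vector_derivative D (Suc n) t) (at t)" and d0: "D 0 = \<gamma>"
    and reg: "\<forall>t. D 1 t \<noteq> 0" and hor: "\<forall>t. horizontal (\<gamma> t) (D 1 t)"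
    unfolding open_legendrian_param_def smooth_curve_with_derivs_def by auto
  have dg: "(\<gamma> has_vector_derivative D 1 t) (at t)" for t using sm d0 by (metis One_nat_def)
  define p where "p \<equiv> \<lambda>t. fst (D 1 t)"
  define q where "q \<equiv> \<lambda>t. fst (snd (D 1 t))"
  define r where "r \<equiv> \<lambda>t. snd (snd (D 1 t))"
  have dx: "(x has_real_derivative p t) (at t)" for t using vd_comp(1)[OF dg] unfolding x_def p_def .
  have dy: "(y has_real_derivative q t) (at t)" for t using vd_comp(2)[OF dg] unfolding y_def q_def .
  have du: "(u has_real_derivative r t) (at t)" for t using vd_comp(3)[OF dg] unfolding u_def r_def .
  have dp: "(p has_real_derivative fst (D 2 t)) (at t)" for t using vd_comp(1)[OF sm[rule_format, of 1 t]] unfolding p_def by (simp add: numeral_2_eq_2)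
  have dq: "(q has_real_derivative fst (snd (D 2 t))) (at t)" for t using vd_comp(2)[OF sm[rule_format, of 1 t]] unfolding q_def by (simp add: numeral_2_eq_2)
  have gt: "\<gamma> t = (x t, y t, u t)" for t by (simp add: x_def y_def u_def)
  have Dt: "D 1 t = (p t, q t, r t)" for t by (simp add: p_def q_def r_def)
  have hr: "r t = 1/2 * (x t * q t - y t * p t)" for t
    using hor[rule_format, of t] unfolding gt Dt horizontal_def by simp
  have pq: "p t^2 + q t^2 > 0" for t
  proof (rule ccontr)
    assume "\<not> p t^2 + q t^2 > 0"
    hence "p t = 0" "q t = 0" by (smt (verit) zero_le_power2 power_eq_0_iff)+
    hence "D 1 t = 0" using hr[of t] Dt[of t] by (simp add: zero_prod_def)
    thus False using reg by auto
  qed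
  have dH: "d_H (\<gamma> s) (\<gamma> t) = root 4 (((x t - x s)^2 + (y t - y s)^2)^2 + 16 * (u t - u s - 1/2*(x s * y t - x t * y s))^2)" for s t
  proof -
    have "heis_mult (heis_inv (\<gamma> s)) (\<gamma> t) = (x t - x s, y t - y s, u t - u s - 1/2*(x s * y t - x t * y s))"
      unfolding gt heis_mult_def heis_inv_def by (simp add: algebra_simps)
    thus ?thesis unfolding d_H_def koranyi_norm_def by simp
  qed
  have cp: "continuous_on UNIV p" using dp by (meson DERIV_isCont continuous_at_imp_continuous_on)
  have cq: "continuous_on UNIV q" using dq by (meson DERIV_isCont continuous_at_imp_continuous_on)
  define m where "m \<equiv> \<lambda>t. sqrt (p t^2 + q t^2)"
  have cm: "continuous_on UNIV m" unfolding m_def by (intro continuous_intros cp cq)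
  have cmI: "continuous_on S m" for S using cm continuous_on_subset by blast
  have w0: "u t - u s - 1/2*(x s * y t - x t * y s) = 0" if st: "s < t" for s t
  proof -
    define L where "L \<equiv> \<lambda>\<tau>. integral {s..\<tau>} m"
    define w where "w \<equiv> \<lambda>\<tau>. u \<tau> - u s - 1/2*(x s * y \<tau> - x \<tau> * y s)"
    define E where "E \<equiv> \<lambda>\<tau>. ((x \<tau> - x s)^2 + (y \<tau> - y s)^2)^2 + 16 * (w \<tau>)^2"
    have Leq: "L \<tau> ^ 4 = E \<tau>" if "\<tau> \<ge> s" for \<tau>
    proof -
      have "hnorm (D 1 r) = m r" for r unfolding Dt hnorm_def m_def by simp
      hence "arc_length D s \<tau> = L \<tau>" unfolding arc_length_def L_def by simp
      hence "root 4 (E \<tau>) = L \<tau>" using A3 that dH[of s \<tau>] unfolding E_def w_def by simp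
      moreover have "E \<tau> \<ge> 0" unfolding E_def by simp
      ultimately show ?thesis by (metis real_root_pow_pos2 zero_less_numeral)
    qed
    have dL: "(L has_real_derivative m t) (at t)"
    proof -
      have "(L has_real_derivative m t) (at t within {s..t+1})"
        unfolding L_def by (rule integral_has_real_derivative[OF cmI]) (use st in auto)
      thus ?thesis using st by (simp add: at_within_Icc_at)
    qed
    have dL4: "((\<lambda>\<tau>. L \<tau> ^ 4) has_real_derivative 4 * L t ^ 3 * m t) (at t)"
      using DERIV_power[OF dL, of 4] by (simp add: mult_ac)
    have dE: "(E has_real_derivative 2*((x t - x s)^2 + (y t - y s)^2)*(2*(x t - x s)*p t+2*(y t - y s)*q t) + 32*w t*(r t - 1/2*(x s * q t - p t * y s))) (at t)"
      unfolding E_def w_def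
      by (rule dE_lemma[OF dx dy du])
    have dE': "(E has_real_derivative 4 * L t ^ 3 * m t) (at t)"
      by (rule has_field_derivative_transform_within_open[OF dL4, of "{s<..}"]) (use st Leq in auto)
    have eq: "4 * L t ^ 3 * m t = 2*((x t - x s)^2 + (y t - y s)^2)*(2*(x t - x s)*p t+2*(y t - y s)*q t) + 32*w t*(r t - 1/2*(x s * q t - p t * y s))"
      using DERIV_unique[OF dE' dE] .
    have r2: "r t - 1/2*(x s * q t - p t * y s) = 1/2*((x t - x s)*q t - (y t - y s)*p t)"
      unfolding hr by (simp add: algebra_simps)
    have L0: "L t \<ge> 0" unfolding L_def by (rule integral_nonneg[OF integrable_continuous_interval[OF cmI]]) (simp add: m_def)
    have eq2: "4*L t^3* sqrt((p t)^2+(q t)^2) = 2*((x t - x s)^2+(y t - y s)^2)*(2*(x t - x s)*p t+2*(y t - y s)*q t) + 32*w t*(1/2*((x t - x s)*q t - (y t - y s)*p t))"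
      using eq unfolding r2 m_def .
    have E2: "L t^4 = ((x t - x s)^2+(y t - y s)^2)^2 + 16*(w t)^2" using Leq[of t] st unfolding E_def by simp
    have "w t = 0" by (rule alg[OF L0 E2 eq2 pq])
    thus ?thesis unfolding w_def .
  qed
  show ?thesis
  proof (cases s t rule: linorder_cases)
    case less then show ?thesis using w0[of s t] by simp
  next
    case equal then show ?thesis by simp
  next
    case greater then show ?thesis using w0[of t s] by (simp add: algebra_simps)
  qed
qed


lemma surj_aux:
  fixes f :: "real \<Rightarrow> real"
  assumes cf: "continuous_on UNIV f" and inj: "inj f"
    and big: "\<And>M. \<exists>R. \<forall>t. R \<le> \<bar>t\<bar> \<longrightarrow> M \<le> \<bar>f t\<bar>"
  shows "\<exists>t. f t = c"
proof -
  obtain R where R: "\<forall>t. R \<le> \<bar>t\<bar> \<longrightarrow> \<bar>c\<bar> + \<bar>f 0\<bar> + 1 \<le> \<bar>f t\<bar>" using big by blast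
  define T where "T = max R 1"
  have T: "T > 0" "R \<le> \<bar>T\<bar>" "R \<le> \<bar>-T\<bar>" unfolding T_def by auto
  have fT: "\<bar>c\<bar> + \<bar>f 0\<bar> + 1 \<le> \<bar>f T\<bar>" "\<bar>c\<bar> + \<bar>f 0\<bar> + 1 \<le> \<bar>f (-T)\<bar>" using R T by auto
  have cI: "continuous_on {-T..T} f" using cf continuous_on_subset by blast
  have "(f (-T) < f 0 \<and> f 0 < f T) \<or> (f T < f 0 \<and> f 0 < f (-T))"
    by (rule continuous_inj_imp_mono[OF _ _ cI]) (use T inj in \<open>auto intro: inj_on_subset\<close>)
  then show ?thesis
  proof
    assume h: "f (-T) < f 0 \<and> f 0 < f T"
    hence "f (-T) \<le> c" "c \<le> f T" using fT by auto
    then show ?thesis using IVT'[OF _ _ _ cI] T by force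
  next
    assume h: "f T < f 0 \<and> f 0 < f (-T)"
    hence "f T \<le> c" "c \<le> f (-T)" using fT by auto
    then show ?thesis using IVT2'[OF _ _ _ cI] T by force
  qed
qed

theorem proposition4p2:
  fixes K :: "heis set" and \<gamma> :: "real \<Rightarrow> heis" and D :: "nat \<Rightarrow> real \<Rightarrow> heis"
  assumes "open_legendrian_param \<gamma> D"
    and "K = range \<gamma>"
    and "\<forall>s t. s \<le> t \<longrightarrow> d_H (\<gamma> s) (\<gamma> t) = arc_length D s t"
  shows "infinite_R_circle K"
proof -
  define x where "x \<equiv> \<lambda>t. fst (\<gamma> t)"
  define y where "y \<equiv> \<lambda>t. fst (snd (\<gamma> t))"
  define u where "u \<equiv> \<lambda>t. snd (snd (\<gamma> t))"
  have W: "u t - u s = 1/2 * (x s * y t - x t * y s)" for s t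
    using main_w0[OF assms(1) assms(3)] unfolding x_def y_def u_def by blast
  from assms(1) have sm: "\<forall>n t. (D n has_vector_derivative D (Suc n) t) (at t)" and d0: "D 0 = \<gamma>"
    and inj: "inj \<gamma>" and propr: "filterlim (\<lambda>t. norm (\<gamma> t)) at_top at_infinity"
    unfolding open_legendrian_param_def smooth_curve_with_derivs_def by auto
  have dg: "(\<gamma> has_vector_derivative D 1 t) (at t)" for t using sm d0 by (metis One_nat_def)
  have cx: "continuous_on UNIV x" using vd_comp(1)[OF dg] unfolding x_def
    by (meson DERIV_isCont continuous_at_imp_continuous_on)
  have cy: "continuous_on UNIV y" using vd_comp(2)[OF dg] unfolding y_def
    by (meson DERIV_isCont continuous_at_imp_continuous_on)
  have gt: "\<gamma> t = (x t, y t, u t)" for t by (simp add: x_def y_def u_def)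
  obtain t1 where t1: "(x t1, y t1) \<noteq> (x 0, y 0)"
  proof (rule ccontr)
    assume "\<not> thesis"
    with that have all: "x t = x 0 \<and> y t = y 0" for t by blast
    have "u t = u 0" for t using W[of 0 t] all[of t] by simp
    hence "\<gamma> 1 = \<gamma> 0" using all gt by metis
    with inj show False by (metis injD zero_neq_one)
  qed
  define a where "a = x t1 - x 0"
  define b where "b = y t1 - y 0"
  define n where "n = a^2 + b^2"
  have n0: "n > 0" using t1 unfolding n_def a_def b_def by (auto simp: sum_power2_gt_zero_iff)
  have ab: "(a, b) \<noteq> (0, 0)" using t1 unfolding a_def b_def by auto
  define k where "k = -(1/2) * (y 0 * a - x 0 * b)"
  define f where "f \<equiv> \<lambda>t. ((x t - x 0) * a + (y t - y 0) * b) / n"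
  define lin where "lin \<equiv> \<lambda>c. (x 0 + c * a, y 0 + c * b, u 0 + c * k)"
  have cross: "(x t - x 0) * b - (y t - y 0) * a = 0" for t
  proof -
    have "u t - u 0 = (u t - u t1) + (u t1 - u 0)" by simp
    hence "x 0 * y t - x t * y 0 = (x t1 * y t - x t * y t1) + (x 0 * y t1 - x t1 * y 0)"
      using W[of 0 t] W[of t1 t] W[of 0 t1] by simp
    thus ?thesis unfolding a_def b_def by (simp add: algebra_simps)
  qed
  have xf: "x t = x 0 + f t * a" for t
  proof -
    have "(x t - x 0) * n - ((x t - x 0) * a + (y t - y 0) * b) * a = b * ((x t - x 0) * b - (y t - y 0) * a)"
      unfolding n_def by (simp add: algebra_simps power2_eq_square)
    hence "(x t - x 0) * n = ((x t - x 0) * a + (y t - y 0) * b) * a"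
      using cross[of t] by simp
    thus ?thesis unfolding f_def using n0 by (simp add: field_simps)
  qed
  have yf: "y t = y 0 + f t * b" for t
  proof -
    have "(y t - y 0) * n - ((x t - x 0) * a + (y t - y 0) * b) * b = - a * ((x t - x 0) * b - (y t - y 0) * a)"
      unfolding n_def by (simp add: algebra_simps power2_eq_square)
    hence "(y t - y 0) * n = ((x t - x 0) * a + (y t - y 0) * b) * b"
      using cross[of t] by simp
    thus ?thesis unfolding f_def using n0 by (simp add: field_simps)
  qed
  have uf: "u t = u 0 + f t * k" for t
  proof -
    have "u t = u 0 + 1/2 * (x 0 * y t - x t * y 0)"
      using W[of t 0] by linarith
    also have "x 0 * y t - x t * y 0 = x 0 * (y 0 + f t * b) - (x 0 + f t * a) * y 0"
      by (subst xf[of t], subst yf[of t]) (rule refl)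
    finally have "u t = u 0 + 1/2 * (x 0 * (y 0 + f t * b) - (x 0 + f t * a) * y 0)" .
    thus ?thesis unfolding k_def by (simp add: algebra_simps)
  qed
  have gl: "\<gamma> t = lin (f t)" for t unfolding gt lin_def
    by (subst xf[of t], subst yf[of t], subst uf[of t]) (rule refl)
  have cf: "continuous_on UNIV f" unfolding f_def using n0 by (intro continuous_intros cx cy) auto
  have injf: "inj f"
  proof (rule injI)
    fix s t assume "f s = f t"
    hence "\<gamma> s = \<gamma> t" using gl by simp
    thus "s = t" using inj by (simp add: inj_eq)
  qed
  define P0 :: heis where "P0 = (x 0, y 0, u 0)"
  define V :: heis where "V = (a, b, k)"
  have lP: "lin c = P0 + c *\<^sub>R V" for c unfolding lin_def P0_def V_def by simp
  have V0: "norm V > 0" unfolding V_def using ab by (auto simp: zero_prod_def)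
  have big: "\<exists>R. \<forall>t. R \<le> \<bar>t\<bar> \<longrightarrow> M \<le> \<bar>f t\<bar>" for M
  proof -
    have "eventually (\<lambda>t. norm P0 + M * norm V \<le> norm (\<gamma> t)) at_infinity"
      using propr unfolding filterlim_at_top by blast
    then obtain R where R: "\<forall>t. R \<le> norm t \<longrightarrow> norm P0 + M * norm V \<le> norm (\<gamma> t)"
      unfolding eventually_at_infinity by blast
    have "M \<le> \<bar>f t\<bar>" if "R \<le> \<bar>t\<bar>" for t
    proof -
      have "norm P0 + M * norm V \<le> norm (\<gamma> t)" using R that by auto
      also have "\<dots> \<le> norm P0 + \<bar>f t\<bar> * norm V" unfolding gl lP
        by (metis norm_scaleR norm_triangle_ineq real_norm_def)
      finally have "M * norm V \<le> \<bar>f t\<bar> * norm V" by simp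
      thus ?thesis using V0 by simp
    qed
    thus ?thesis by blast
  qed
  have "K = {(x 0 + t * a, y 0 + t * b, u 0 + t * (-(1/2) * (y 0 * a - x 0 * b))) | t. True}" (is "K = ?S")
  proof
    show "K \<subseteq> ?S" unfolding assms(2) gl lin_def k_def by auto
    show "?S \<subseteq> K"
    proof
      fix P assume "P \<in> {(x 0 + t * a, y 0 + t * b, u 0 + t * (-(1/2) * (y 0 * a - x 0 * b))) | t. True}"
      then obtain c where c: "P = lin c" unfolding lin_def k_def by auto
      obtain t where "f t = c" using surj_aux[OF cf injf big] by blast
      thus "P \<in> K" unfolding assms(2) c using gl by auto
    qed
  qed
  thus ?thesis unfolding infinite_R_circle_def using ab by blast
qed

end
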